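(* Let $v$ be an additive valuation with nonnegative item values shared by $n$ agents, and items $g_1,\dots,g_T$ on a line. For $t\in[T]$ let $B_t=\frac1n v(M_t)-\frac{n-1}{n}\max_{g\in M_t}v(g)$ and $B_t^{\max}=\max_{s\in[t]}B_s$. Then for every $t\in[T]$ there exists a contiguous allocation $A$ of $M_t$ with $\min_{i\in[n]}v(A_i)\ge B^{\max}_t$; letting $X^t$ be the one among these whose vector $\ell(A)=(\ell(A_1),\dots,\ell(A_{n-1}))$ is lexicographically minimum, we have $\ell(X^t_i)\le \ell(X^{t+1}_i)$ for all $t<T$ and $i<n$.
   Context: $M_t=\{g_1,\dots,g_t\}$, $M_{l,r}=\{g_{l+1},\dots,g_r\}$. A contiguous allocation of $M_t$ is $(A_1,\dots,A_n)$ with $A_i=M_{p_{i-1},p_i}$ for some $0=p_0\le p_1\le\dots\le p_{n-1}\le p_n=t$; $\ell(A_i)=p_i$ denotes the index of the last item of block $i$ (with the convention that it equals $p_i$ even if the block is empty). It is a known result (Suksompong) that for additive valuations on a line there always exists a contiguous allocation with $v(A_i)\ge\frac1n v(M)-\frac{n-1}{n}\max_{g\in M}v(g)$ for all $i$. *)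

theory Defs
  imports Complex_Main
begin

text \<open>A contiguous allocation of M_t among n agents is
given by its list of interior cut points ps = [p_1, ..., p_(n-1)]; with p_0 = 0 and
p_n = t, block i is M_{p_(i-1), p_i} = {p_(i-1)+1 .. p_i}, and ell(A_i) = p_i.\<close>

definition cutpts :: "nat \<Rightarrow> nat list \<Rightarrow> nat list" where
  "cutpts t ps = 0 # ps @ [t]"

definition is_contig_alloc :: "nat \<Rightarrow> nat \<Rightarrow> nat list \<Rightarrow> bool" where
  "is_contig_alloc n t ps \<longleftrightarrow> length ps = n - 1 \<and> sorted (cutpts t ps)"

definition block_val :: "(nat \<Rightarrow> real) \<Rightarrow> nat \<Rightarrow> nat list \<Rightarrow> nat \<Rightarrow> real" where
  "block_val v t ps i = (\<Sum>g\<in>{cutpts t ps ! (i - 1)<..cutpts t ps ! i}. v g)"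

definition bound :: "(nat \<Rightarrow> real) \<Rightarrow> nat \<Rightarrow> nat \<Rightarrow> real" where
  "bound v n t = (1 / real n) * (\<Sum>g\<in>{1..t}. v g)
                 - (real n - 1) / real n * Max (v ` {1..t})"

definition bound_max :: "(nat \<Rightarrow> real) \<Rightarrow> nat \<Rightarrow> nat \<Rightarrow> real" where
  "bound_max v n t = Max ((\<lambda>s. bound v n s) ` {1..t})"

definition good_alloc :: "(nat \<Rightarrow> real) \<Rightarrow> nat \<Rightarrow> nat \<Rightarrow> nat list \<Rightarrow> bool" where
  "good_alloc v n t ps \<longleftrightarrow> is_contig_alloc n t ps \<and>
     (\<forall>i\<in>{1..n}. block_val v t ps i \<ge> bound_max v n t)"

definition lexmin_good :: "(nat \<Rightarrow> real) \<Rightarrow> nat \<Rightarrow> nat \<Rightarrow> nat list \<Rightarrow> bool" where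
  "lexmin_good v n t ps \<longleftrightarrow> good_alloc v n t ps \<and>
     (\<forall>qs. good_alloc v n t qs \<longrightarrow> ps = qs \<or> (ps, qs) \<in> lexord {(a, b). a < b})"

end

theory Submission
  imports Defs
begin

lemma nth_cutpts:
  "j \<le> length ps + 1 \<Longrightarrow> cutpts t ps ! j =
     (if j = 0 then 0 else if j \<le> length ps then ps!(j-1) else t)"
  by (cases j) (auto simp: cutpts_def nth_append)

lemma greedy:
  fixes v :: "nat \<Rightarrow> real"
  assumes "\<forall>g\<in>{a<..t}. v g \<le> m" "B + m \<ge> 0" "a \<le> t"
    "sum v {a<..t} \<ge> real (Suc k) * B + real k * m"
  shows "\<exists>ps. length ps = k \<and> sorted (a#ps@[t]) \<and>
     (\<forall>i\<in>{1..Suc k}. sum v {(a#ps@[t])!(i-1)<..(a#ps@[t])!i} \<ge> B)"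
  using assms
proof (induction k arbitrary: a)
  case 0
  then show ?case by (intro exI[of _ "[]"]) auto
next
  case (Suc k)
  define P where "P = (\<lambda>p. a \<le> p \<and> p \<le> t \<and> sum v {a<..p} \<ge> B)"
  have eq: "real (Suc (Suc k)) * B + real (Suc k) * m = (real (Suc k) * B + real k * m) + (B + m)"
    by (simp add: algebra_simps)
  have "real (Suc k) * B + real k * m = B + real k * (B + m)" by (simp add: algebra_simps)
  moreover have "real k * (B + m) \<ge> 0" using Suc.prems(2) by simp
  ultimately have Pt: "P t" using Suc.prems eq unfolding P_def by linarith
  define p where "p = (LEAST p. P p)"
  have Pp: "P p" using LeastI[of P t] Pt p_def by auto
  have pmin: "\<And>q. P q \<Longrightarrow> p \<le> q" using Least_le p_def by metis
  have le: "sum v {a<..p} \<le> B + m"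
  proof (cases "p = a")
    case True then show ?thesis using Suc.prems(2) by simp
  next
    case False
    then obtain q where q: "p = Suc q" "a \<le> q" using Pp P_def by (cases p) auto
    have "\<not> P q" using pmin q by fastforce
    hence lt: "sum v {a<..q} < B" using q Pp P_def by auto
    have "{a<..p} = insert p {a<..q}" using q by auto
    hence "sum v {a<..p} = v p + sum v {a<..q}" using q by simp
    moreover have "v p \<le> m" using Suc.prems(1) Pp P_def False by auto
    ultimately show ?thesis using lt by linarith
  qed
  have split: "sum v {a<..t} = sum v {a<..p} + sum v {p<..t}"
  proof -
    have "{a<..t} = {a<..p} \<union> {p<..t}" using Pp P_def by auto
    moreover have "{a<..p} \<inter> {p<..t} = {}" by auto
    ultimately show ?thesis by (simp add: sum.union_disjoint)
  qed
  have rest: "sum v {p<..t} \<ge> real (Suc k) * B + real k * m"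
    using split le Suc.prems(4) eq by linarith
  have mp: "\<forall>g\<in>{p<..t}. v g \<le> m" using Suc.prems(1) Pp P_def by auto
  obtain ps where ps: "length ps = k" "sorted (p#ps@[t])"
     "\<forall>i\<in>{1..Suc k}. sum v {(p#ps@[t])!(i-1)<..(p#ps@[t])!i} \<ge> B"
    using Suc.IH[OF mp Suc.prems(2) _ rest] Pp P_def by auto
  show ?case
  proof (intro exI[of _ "p#ps"] conjI)
    show "length (p#ps) = Suc k" using ps by simp
    show "sorted (a # (p#ps) @ [t])" using ps(2) Pp P_def by auto
    show "\<forall>i\<in>{1..Suc (Suc k)}. B \<le> sum v {(a # (p # ps) @ [t]) ! (i - 1)<..(a # (p # ps) @ [t]) ! i}"
    proof
      fix i assume i: "i \<in> {1..Suc (Suc k)}"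
      show "B \<le> sum v {(a # (p # ps) @ [t]) ! (i - 1)<..(a # (p # ps) @ [t]) ! i}"
      proof (cases "i = 1")
        case True then show ?thesis using Pp P_def by simp
      next
        case False
        then obtain j where j: "i = Suc j" "j \<in> {1..Suc k}" using i by (cases i) auto
        then obtain j' where j': "j = Suc j'" by (cases j) auto
        have "(a # (p # ps) @ [t]) ! (i-1) = (p # ps @ [t]) ! (j - 1)"
             "(a # (p # ps) @ [t]) ! i = (p # ps @ [t]) ! j" using j j' by simp_all
        then show ?thesis using ps(3) j by simp
      qed
    qed
  qed
qed

lemma extend:
  fixes v :: "nat \<Rightarrow> real"
  assumes "is_contig_alloc n s ps" "s \<le> t" "n \<ge> 1" "\<forall>g\<in>{s<..t}. v g \<ge> 0" "i\<in>{1..n}"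
  shows "block_val v t ps i \<ge> block_val v s ps i"
proof -
  have len: "length ps = n - 1" using assms(1) is_contig_alloc_def by auto
  have il: "i - 1 \<le> length ps + 1" using assms(3,5) len by auto
  have il2: "i - 1 \<le> length ps" using assms(3,5) len by auto
  have e1: "cutpts t ps ! (i-1) = cutpts s ps ! (i-1)"
    using il2 nth_cutpts[OF il, of t] nth_cutpts[OF il, of s] by simp
  show ?thesis
  proof (cases "i = n")
    case False
    then have il3: "i \<le> length ps" "i \<le> length ps + 1" using assms(3,5) len by auto
    then have "cutpts t ps ! i = cutpts s ps ! i" using nth_cutpts[OF il3(2), of t] nth_cutpts[OF il3(2), of s] by simp
    then show ?thesis using e1 by (simp add: block_val_def)
  next
    case True
    then have il4: "i \<le> length ps + 1" "\<not> i \<le> length ps" "i \<noteq> 0" using assms(3,5) len by auto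
    then have a: "cutpts t ps ! i = t" "cutpts s ps ! i = s"
      using nth_cutpts[OF il4(1), of t] nth_cutpts[OF il4(1), of s] by simp_all
    have "sum v {cutpts s ps ! (i-1)<..s} \<le> sum v {cutpts s ps ! (i-1)<..t}"
      by (rule sum_mono2) (use assms(2,4) in auto)
    then show ?thesis using e1 a by (simp add: block_val_def)
  qed
qed

lemma part1:
  fixes v :: "nat \<Rightarrow> real"
  assumes n: "n \<ge> 1" and nn: "\<And>g. g \<in> {1..T} \<Longrightarrow> v g \<ge> 0" and t: "t \<in> {1..T}"
  shows "\<exists>ps. good_alloc v n t ps"
proof -
  have "bound_max v n t \<in> (\<lambda>s. bound v n s) ` {1..t}"
    unfolding bound_max_def using t by (intro Max_in) auto
  then obtain s where s: "s \<in> {1..t}" "bound_max v n t = bound v n s" by auto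
  define m where "m = Max (v ` {1..s})"
  define S where "S = sum v {1..s}"
  define B where "B = bound v n s"
  have set0: "{0<..s} = {1..s}" by auto
  have vm: "\<forall>g\<in>{0<..s}. v g \<le> m" unfolding set0 m_def by auto
  have m0: "m \<ge> 0"
  proof -
    have "v 1 \<le> m" using vm s by auto
    moreover have "v 1 \<ge> 0" using nn s t by auto
    ultimately show ?thesis by simp
  qed
  have S0: "S \<ge> 0" unfolding S_def using nn s t by (intro sum_nonneg) auto
  have npos: "real n > 0" using n by simp
  have Bm: "B + m = (S + m) / real n" unfolding B_def bound_def S_def m_def
    using npos by (simp add: field_simps)
  have Bm0: "B + m \<ge> 0" using Bm S0 m0 npos by simp
  have key: "real n * B + (real n - 1) * m = S" unfolding B_def bound_def S_def m_def
    using npos by (simp add: field_simps)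
  have nk: "real (n - 1) = real n - 1" using n by (simp add: of_nat_diff)
  have "sum v {0<..s} \<ge> real (Suc (n-1)) * B + real (n-1) * m"
    using key nk n set0 S_def by simp
  from greedy[OF vm Bm0 _ this] obtain ps where ps: "length ps = n - 1" "sorted (0#ps@[s])"
     "\<forall>i\<in>{1..Suc (n-1)}. sum v {(0#ps@[s])!(i-1)<..(0#ps@[s])!i} \<ge> B" by auto
  have ca: "is_contig_alloc n s ps" using ps unfolding is_contig_alloc_def cutpts_def by auto
  have cat: "is_contig_alloc n t ps" using ps s unfolding is_contig_alloc_def cutpts_def
    by (auto simp: sorted_append)
  have "\<forall>i\<in>{1..n}. block_val v t ps i \<ge> bound_max v n t"
  proof
    fix i assume i: "i \<in> {1..n}"
    have "block_val v s ps i \<ge> B" using ps(3) i n unfolding block_val_def cutpts_def by auto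
    moreover have "block_val v t ps i \<ge> block_val v s ps i"
      by (rule extend[OF ca _ n _ i]) (use s t nn in auto)
    ultimately show "block_val v t ps i \<ge> bound_max v n t" using s B_def by simp
  qed
  then show ?thesis using cat good_alloc_def by blast
qed

lemma lex_contra:
  "length xs = length ys \<Longrightarrow> (\<forall>i<length xs. ys!i \<le> xs!i)
    \<Longrightarrow> (xs, ys) \<in> lexord {(a,b). a < (b::nat)} \<Longrightarrow> False"
  by (auto simp: lexord_take_index_conv)

lemma lexmin_exists:
  "finite S \<Longrightarrow> S \<noteq> {} \<Longrightarrow> \<exists>x\<in>S. \<forall>y\<in>S. x = y \<or> (x,y) \<in> lexord {(a,b). a < (b::nat)}"
proof (induction S rule: finite_ne_induct)
  case (singleton x) then show ?case by auto
next
  case (insert x F)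
  then obtain m where m: "m \<in> F" "\<forall>y\<in>F. m = y \<or> (m,y) \<in> lexord {(a,b). a < (b::nat)}" by auto
  have tr: "trans {(a,b). a < (b::nat)}" by (auto simp: trans_def)
  have "(x,m) \<in> lexord {(a,b). a < (b::nat)} \<or> x = m \<or> (m,x) \<in> lexord {(a,b). a < (b::nat)}"
    by (rule lexord_linear) auto
  then show ?case
  proof (elim disjE)
    assume xm: "(x,m) \<in> lexord {(a,b). a < (b::nat)}"
    show ?thesis using m xm lexord_trans[OF xm _ tr] by (intro bexI[of _ x]) auto
  next
    assume "x = m" then show ?thesis using m by auto
  next
    assume "(m,x) \<in> lexord {(a,b). a < (b::nat)}"
    then show ?thesis using m by (intro bexI[of _ m]) auto
  qed
qed

lemma part2:
  fixes v :: "nat \<Rightarrow> real"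
  assumes n: "n \<ge> 1" and nn: "\<And>g. g \<in> {1..T} \<Longrightarrow> v g \<ge> 0" and t: "t \<in> {1..T}"
  shows "\<exists>ps. lexmin_good v n t ps"
proof -
  let ?S = "{ps. good_alloc v n t ps}"
  have sub: "?S \<subseteq> {ps. set ps \<subseteq> {0..t} \<and> length ps = n - 1}"
    by (auto simp: good_alloc_def is_contig_alloc_def cutpts_def sorted_append)
  have "finite ?S" by (rule finite_subset[OF sub]) (rule finite_lists_length_eq, simp)
  moreover have "?S \<noteq> {}" using part1[OF n nn t] by auto
  ultimately obtain x where "x \<in> ?S" "\<forall>y\<in>?S. x = y \<or> (x,y) \<in> lexord {(a,b). a < (b::nat)}"
    using lexmin_exists by blast
  then show ?thesis unfolding lexmin_good_def by auto
qed

lemma part3: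
  fixes v :: "nat \<Rightarrow> real"
  assumes n: "n \<ge> 1" and nn: "\<And>g. g \<in> {1..T} \<Longrightarrow> v g \<ge> 0"
    and t: "1 \<le> t" "t < T" and LX: "lexmin_good v n t X" and LY: "lexmin_good v n (t+1) Y"
    and i: "i < n - 1"
  shows "X!i \<le> Y!i"
proof (rule ccontr)
  assume neg: "\<not> X!i \<le> Y!i"
  have gX: "good_alloc v n t X" and gY: "good_alloc v n (t+1) Y"
    using LX LY lexmin_good_def by auto
  have lenX: "length X = n - 1" and lenY: "length Y = n - 1"
    using gX gY good_alloc_def is_contig_alloc_def by auto
  have sX: "sorted (cutpts t X)" and sY: "sorted (cutpts (t+1) Y)"
    using gX gY good_alloc_def is_contig_alloc_def by auto
  define Z where "Z = map2 min X Y"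
  have lenZ: "length Z = n - 1" using lenX lenY Z_def by simp
  have Zi: "\<And>j. j < n - 1 \<Longrightarrow> Z!j = min (X!j) (Y!j)" using lenX lenY Z_def by simp
  define c where "c = cutpts t X"
  define d where "d = cutpts (t+1) Y"
  define e where "e = cutpts t Z"
  have ce: "\<And>j. j \<le> n \<Longrightarrow> e ! j = min (c ! j) (d ! j)"
    unfolding c_def d_def e_def using n lenX lenY lenZ Zi by (auto simp: nth_cutpts)
  have lc: "length c = n + 1" "length d = n + 1" "length e = n + 1"
    using lenX lenY lenZ n by (auto simp: c_def d_def e_def cutpts_def)
  have sc: "\<And>a b. a \<le> b \<Longrightarrow> b \<le> n \<Longrightarrow> c!a \<le> c!b"
    using sX lc unfolding c_def sorted_iff_nth_mono by auto
  have sd: "\<And>a b. a \<le> b \<Longrightarrow> b \<le> n \<Longrightarrow> d!a \<le> d!b"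
    using sY lc unfolding d_def sorted_iff_nth_mono by auto
  have nl: "n \<le> length X + 1" using lenX by simp
  have nl2: "\<not> n \<le> length X" using lenX n by simp
  have cn: "c ! n = t" unfolding c_def using nl2 n nth_cutpts[OF nl, of t] by simp
  have se: "sorted e" unfolding sorted_iff_nth_mono
  proof (intro allI impI)
    fix a b assume ab: "a \<le> b" "b < length e"
    then have "b \<le> n" using lc by simp
    then show "e!a \<le> e!b" using ce[of a] ce[of b] sc[OF ab(1)] sd[OF ab(1)] ab by auto
  qed
  have bmono: "bound_max v n t \<le> bound_max v n (t+1)"
    unfolding bound_max_def using t by (intro Max_mono) auto
  have blocks: "\<forall>j\<in>{1..n}. block_val v t Z j \<ge> bound_max v n t"
  proof
    fix j assume j: "j \<in> {1..n}"
    have ej: "e!j = min (c!j) (d!j)" "e!(j-1) = min (c!(j-1)) (d!(j-1))" using ce j by auto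
    have ctj: "c!j \<le> t" using sc[of j n] j cn by auto
    show "block_val v t Z j \<ge> bound_max v n t"
    proof (cases "c!j \<le> d!j")
      case True
      have "sum v {c!(j-1)<..c!j} \<le> sum v {e!(j-1)<..e!j}"
        by (rule sum_mono2) (use ej True ctj t in \<open>auto intro!: nn\<close>)
      moreover have "block_val v t X j \<ge> bound_max v n t" using gX j good_alloc_def by auto
      ultimately show ?thesis unfolding block_val_def c_def e_def by simp
    next
      case False
      have "sum v {d!(j-1)<..d!j} \<le> sum v {e!(j-1)<..e!j}"
        by (rule sum_mono2) (use ej False ctj t in \<open>auto intro!: nn\<close>)
      moreover have "block_val v (t+1) Y j \<ge> bound_max v n (t+1)" using gY j good_alloc_def by auto
      ultimately show ?thesis using bmono unfolding block_val_def d_def e_def by simp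
    qed
  qed
  have gZ: "good_alloc v n t Z"
    using blocks se lenZ unfolding good_alloc_def is_contig_alloc_def e_def by auto
  then have "X = Z \<or> (X, Z) \<in> lexord {(a,b). a < (b::nat)}" using LX lexmin_good_def by auto
  then show False
  proof
    assume "X = Z" then show False using Zi[OF i] neg by auto
  next
    assume "(X, Z) \<in> lexord {(a,b). a < (b::nat)}"
    moreover have "\<forall>j<length X. Z!j \<le> X!j" using Zi lenX by simp
    ultimately show False using lex_contra lenX lenZ by metis
  qed
qed

theorem mainTheorem2:
  fixes v :: "nat \<Rightarrow> real" and n T :: nat
  assumes "n \<ge> 1"
    and "\<And>g. g \<in> {1..T} \<Longrightarrow> v g \<ge> 0"
  shows "(\<forall>t\<in>{1..T}. \<exists>ps. good_alloc v n t ps)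
       \<and> (\<forall>t\<in>{1..T}. \<exists>ps. lexmin_good v n t ps)
       \<and> (\<forall>t X Y. 1 \<le> t \<longrightarrow> t < T \<longrightarrow> lexmin_good v n t X \<longrightarrow> lexmin_good v n (t + 1) Y
             \<longrightarrow> (\<forall>i<n - 1. X ! i \<le> Y ! i))"
proof (intro conjI ballI allI impI)
  fix t assume t: "t \<in> {1..T}"
  show "\<exists>ps. good_alloc v n t ps" by (rule part1[OF assms(1) assms(2) t]) auto
  show "\<exists>ps. lexmin_good v n t ps" by (rule part2[OF assms(1) assms(2) t]) auto
next
  fix t X Y i assume h: "1 \<le> t" "t < T" "lexmin_good v n t X" "lexmin_good v n (t + 1) Y" "i < n - 1"
  show "X ! i \<le> Y ! i" by (rule part3[OF assms(1) assms(2) h]) auto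
qed

end
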